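(* Let $(M,g)$ be a smooth $2$-dimensional Riemannian manifold with Gaussian curvature $K$. For a point $x\in M$ and a unit vector $\xi\in S_xM$, let $\gamma=\gamma_{x,\xi}$ be the unit-speed geodesic with $\gamma(0)=x$, $\dot\gamma(0)=\xi$, and write $K_\gamma(t)=K(\gamma_{x,\xi}(t))$. Define $a=a(x,\xi,t)$ and $b=b(x,\xi,t)$ as the solutions of the scalar Jacobi equations \[ a''+K_\gamma a=0,\quad a(x,\xi,0)=1,\ a'(x,\xi,0)=0,\qquad b''+K_\gamma b=0,\quad b(x,\xi,0)=0,\ b'(x,\xi,0)=1, \] where primes denote derivatives with respect to $t$. Let $\varphi=b\,\partial_\theta a-a\,\partial_\theta b$. Then $\varphi$ satisfies the ordinary differential equation \[ \varphi^{(3)}+4K_\gamma\varphi'+2K_\gamma'\varphi=-2\,\partial_\theta K_\gamma, \] with initial conditions $\varphi(0)=\varphi'(0)=\varphi''(0)=0$.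
   Context: For a unit vector $\xi\in S_xM$, $\xi_\perp$ denotes the unit vector in $T_xM$ obtained by rotating $\xi$ by $+\pi/2$ (so $\{\xi,\xi_\perp\}$ is a positively oriented orthonormal basis). For a smooth function $u(x,\xi,t)$ (with $(x,\xi)$ in the unit sphere bundle $SM$ and $t$ in the interval of definition of $\gamma_{x,\xi}$), the derivative $\partial_\theta$ is the derivative with respect to rotation of the initial direction: $\partial_\theta u(x,\xi,t)=\frac{d}{ds}\big|_{s=0}u(x,\xi(s),t)$, where $\xi(s)$ is a smooth curve in $S_xM$ with $\xi(0)=\xi$ and $\xi'(0)=\xi_\perp$. In particular $\partial_\theta K_\gamma(t)=\frac{d}{ds}\big|_{s=0}K(\gamma_{x,\xi(s)}(t))$. The functions $a,b$ (and hence $\varphi$) are considered as functions of $(x,\xi,t)$, and derivatives $'$ are with respect to $t$. *)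

theory Defs
  imports "HOL-Analysis.Analysis"
begin

text \<open>Functions of (s,t): s = rotation angle of the initial direction
  (xi(s) = cos s xi + sin s xi_perp), t = geodesic time.\<close>

definition dt :: "(real \<times> real \<Rightarrow> real) \<Rightarrow> real \<times> real \<Rightarrow> real" where
  "dt f = (\<lambda>(s,t). deriv (\<lambda>u. f (s,u)) t)"

definition dth :: "(real \<times> real \<Rightarrow> real) \<Rightarrow> real \<times> real \<Rightarrow> real" where
  "dth f = (\<lambda>(s,t). deriv (\<lambda>u. f (u,t)) s)"

definition dpart :: "bool list \<Rightarrow> (real \<times> real \<Rightarrow> real) \<Rightarrow> real \<times> real \<Rightarrow> real" where
  "dpart ds f = foldr (\<lambda>b h. if b then dth h else dt h) ds f"

definition smooth2_on :: "(real \<times> real) set \<Rightarrow> (real \<times> real \<Rightarrow> real) \<Rightarrow> bool" where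
  "smooth2_on U f \<longleftrightarrow> open U \<and>
     (\<forall>ds. continuous_on U (dpart ds f) \<and>
        (\<forall>s t. (s,t) \<in> U \<longrightarrow>
           (\<lambda>u. dpart ds f (u,t)) differentiable (at s) \<and>
           (\<lambda>u. dpart ds f (s,u)) differentiable (at t)))"

end

theory Submission imports Defs begin

lemma dpart_Cons[simp]: "dpart (False#ds) f = dt (dpart ds f)" "dpart (True#ds) f = dth (dpart ds f)"
  "dpart [] f = f"
  by (simp_all add: dpart_def)

lemma sm_cont: "smooth2_on U f \<Longrightarrow> continuous_on U (dpart ds f)"
  by (simp add: smooth2_on_def)

lemma sm_dt: assumes "smooth2_on U f" "(s,t) \<in> U"
  shows "((\<lambda>u. dpart ds f (s,u)) has_real_derivative dpart (False#ds) f (s,t)) (at t)"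
proof -
  have "(\<lambda>u. dpart ds f (s,u)) differentiable (at t)" using assms by (simp add: smooth2_on_def)
  then show ?thesis by (simp add: dt_def DERIV_deriv_iff_real_differentiable)
qed

lemma sm_ds: assumes "smooth2_on U f" "(s,t) \<in> U"
  shows "((\<lambda>u. dpart ds f (u,t)) has_real_derivative dpart (True#ds) f (s,t)) (at s)"
proof -
  have "(\<lambda>u. dpart ds f (u,t)) differentiable (at s)" using assms by (simp add: smooth2_on_def)
  then show ?thesis by (simp add: dth_def DERIV_deriv_iff_real_differentiable)
qed

lemma sm_open: "smooth2_on U f \<Longrightarrow> open U" by (simp add: smooth2_on_def)

lemma clairaut:
  assumes sm: "smooth2_on U f" and z: "(s0,t0) \<in> U"
  shows "dt (dth f) (s0,t0) = dth (dt f) (s0,t0)"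
proof -
  have oU: "open U" using sm by (simp add: smooth2_on_def)
  obtain e where e: "e > 0" "cball (s0,t0) e \<subseteq> U" using oU z open_contains_cball by blast
  define d where "d = e/2"
  have d: "d > 0" using e d_def by simp
  have box: "(s,t) \<in> U" if "s \<in> {s0-d..s0+d}" "t \<in> {t0-d..t0+d}" for s t
  proof -
    have a1: "\<bar>s0-s\<bar> \<le> d" "\<bar>t0-t\<bar> \<le> d" using that by auto
    have "dist (s0,t0) (s,t) \<le> e"
      using a1 sqrt_sum_squares_le_sum_abs[of "s0-s" "t0-t"]
      by (simp add: dist_Pair_Pair dist_real_def d_def)
    then show ?thesis using e by auto
  qed
  define c where "c = t0 - d"
  define T where "T = t0 + d"
  define h where "h = dth (dt f)"
  have hcont: "continuous_on ({s0-d..s0+d} \<times> {c..T}) h"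
    unfolding h_def
    by (rule continuous_on_subset[OF sm_cont[OF sm, of "[True,False]", simplified]])
       (use box c_def T_def in auto)
  have hcont1: "continuous_on {c..T} (\<lambda>\<tau>. h (s0,\<tau>))"
    by (rule continuous_on_compose2[OF hcont]) (use d in \<open>auto intro!: continuous_intros\<close>)
  have gcont: "continuous_on {c..t} (\<lambda>\<tau>. dt f (x,\<tau>))" if "x \<in> {s0-d..s0+d}" "t \<in> {c..T}" for x t
    by (rule continuous_on_compose2[OF sm_cont[OF sm, of "[False]", simplified]])
       (use box that c_def T_def in \<open>auto intro!: continuous_intros\<close>)
  have ftc: "f (x,t) = f (x,c) + integral {c..t} (\<lambda>\<tau>. dt f (x,\<tau>))"
    if x: "x \<in> {s0-d..s0+d}" and t: "t \<in> {c..T}" for x t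
  proof -
    have "((\<lambda>\<tau>. dt f (x,\<tau>)) has_integral (f (x,t) - f (x,c))) {c..t}"
    proof (rule fundamental_theorem_of_calculus)
      show "c \<le> t" using t by simp
      fix y assume y: "y \<in> {c..t}"
      have "(x,y) \<in> U" using box x y t c_def T_def by auto
      from sm_dt[OF sm this, of "[]"] show "((\<lambda>\<tau>. f (x, \<tau>)) has_vector_derivative dt f (x, y)) (at y within {c..t})"
        by (simp add: has_real_derivative_iff_has_vector_derivative has_vector_derivative_at_within)
    qed
    then show ?thesis by (simp add: integral_unique)
  qed
  have leib: "dth f (s0,t) = dth f (s0,c) + integral {c..t} (\<lambda>\<tau>. h (s0,\<tau>))" if t: "t \<in> {c..T}" for t
  proof -
    have L: "((\<lambda>x. integral (cbox c t) (\<lambda>\<tau>. dt f (x,\<tau>))) has_field_derivative integral (cbox c t) (\<lambda>\<tau>. h (s0,\<tau>)))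
       (at s0 within {s0-d..s0+d})"
    proof (rule leibniz_rule_field_derivative[where fx = "\<lambda>x \<tau>. h (x,\<tau>)"])
      fix x \<tau> assume "x \<in> {s0-d..s0+d}" "\<tau> \<in> cbox c t"
      then have "(x,\<tau>) \<in> U" using box t c_def T_def by auto
      from sm_ds[OF sm this, of "[False]"] show "((\<lambda>x. dt f (x, \<tau>)) has_real_derivative h (x, \<tau>)) (at x within {s0 - d..s0 + d})"
        by (simp add: h_def has_field_derivative_at_within)
    next
      fix x assume "x \<in> {s0-d..s0+d}"
      then show "(\<lambda>\<tau>. dt f (x, \<tau>)) integrable_on cbox c t"
        using gcont[OF _ t] integrable_continuous_interval by (simp add: box_real) blast
    next
      show "continuous_on ({s0 - d..s0 + d} \<times> cbox c t) (\<lambda>(x, \<tau>). h (x, \<tau>))"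
        unfolding case_prod_eta box_real
        by (rule continuous_on_subset[OF hcont]) (use t in auto)
    qed (use d in simp_all)
    have int: "s0 \<in> interior {s0-d..s0+d}" using d by simp
    have L2: "((\<lambda>x. f (x,c) + integral {c..t} (\<lambda>\<tau>. dt f (x,\<tau>))) has_field_derivative
               dth f (s0,c) + integral {c..t} (\<lambda>\<tau>. h (s0,\<tau>))) (at s0)"
      apply (rule DERIV_add)
      using sm_ds[OF sm box[of s0 c], of "[]"] d c_def apply simp
      using L at_within_interior[OF int] by (simp add: box_real)
    have L3: "((\<lambda>x. f (x,t)) has_field_derivative dth f (s0,c) + integral {c..t} (\<lambda>\<tau>. h (s0,\<tau>))) (at s0)"
      by (rule has_field_derivative_transform_within_open[OF L2, of "{s0-d<..<s0+d}"])
         (use d t in \<open>auto intro!: ftc[symmetric]\<close>)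
    then show ?thesis by (simp add: dth_def DERIV_imp_deriv)
  qed
  have cT: "c < t0" "t0 < T" using d by (simp_all add: c_def T_def)
  have I: "((\<lambda>u. integral {c..u} (\<lambda>\<tau>. h (s0,\<tau>))) has_real_derivative h (s0,t0)) (at t0)"
  proof -
    have "((\<lambda>u. integral {c..u} (\<lambda>\<tau>. h (s0,\<tau>))) has_vector_derivative h (s0,t0)) (at t0 within {c..T})"
      by (rule integral_has_vector_derivative[OF hcont1]) (use cT in auto)
    moreover have "t0 \<in> interior {c..T}" using cT by simp
    ultimately show ?thesis by (metis at_within_interior has_real_derivative_iff_has_vector_derivative)
  qed
  have "((\<lambda>u. dth f (s0,u)) has_real_derivative h (s0,t0)) (at t0)"
    apply (rule has_field_derivative_transform_within_open[OF DERIV_add[OF DERIV_const[of "dth f (s0,c)"] I, simplified], of "{c<..<T}"])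
    using cT by (auto intro!: leib[symmetric])
  then show ?thesis by (simp add: dt_def h_def DERIV_imp_deriv)
qed


lemma smooth_dt: "smooth2_on U f \<Longrightarrow> smooth2_on U (dt f)"
proof -
  have e: "dpart ds (dt f) = dpart (ds @ [False]) f" for ds
    by (simp add: dpart_def)
  assume H: "smooth2_on U f"
  show "smooth2_on U (dt f)"
    unfolding smooth2_on_def e
  proof (intro conjI allI impI)
    show "open U" using H by (simp add: smooth2_on_def)
  next
    fix ds show "continuous_on U (dpart (ds @ [False]) f)" using H unfolding smooth2_on_def by blast
  next
    fix ds s t assume "(s,t) \<in> U"
    then show "(\<lambda>u. dpart (ds @ [False]) f (u, t)) differentiable at s"
      "(\<lambda>u. dpart (ds @ [False]) f (s, u)) differentiable at t"
      using H unfolding smooth2_on_def by blast+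
  qed
qed

lemma open_slice_t: "open (U::(real\<times>real) set) \<Longrightarrow> open {u. ((s::real),u) \<in> U}"
proof -
  assume "open U"
  then have "open ((\<lambda>u. (s,u)) -` U)"
    by (intro continuous_open_vimage continuous_Pair continuous_const continuous_ident)
  then show ?thesis by (simp add: vimage_def)
qed

lemma open_slice_s: "open (U::(real\<times>real) set) \<Longrightarrow> open {u. (u,(t::real)) \<in> U}"
proof -
  assume "open U"
  then have "open ((\<lambda>u. (u,t)) -` U)"
    by (intro continuous_open_vimage continuous_Pair continuous_const continuous_ident)
  then show ?thesis by (simp add: vimage_def)
qed

lemma dt_cong:
  assumes "open U" "(s,t) \<in> U" "\<And>w. w \<in> U \<Longrightarrow> F w = G w"
  shows "dt F (s,t) = dt G (s,t)"
proof -
  have "eventually (\<lambda>u. (s,u) \<in> U) (nhds t)"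
    using eventually_nhds_in_open[OF open_slice_t[OF assms(1), of s], of t] assms(2) by simp
  then have "eventually (\<lambda>u. F (s,u) = G (s,u)) (nhds t)"
    by eventually_elim (use assms(3) in auto)
  then show ?thesis by (simp add: dt_def deriv_cong_ev)
qed

lemma dth_cong:
  assumes "open U" "(s,t) \<in> U" "\<And>w. w \<in> U \<Longrightarrow> F w = G w"
  shows "dth F (s,t) = dth G (s,t)"
proof -
  have "eventually (\<lambda>u. (u,t) \<in> U) (nhds s)"
    using eventually_nhds_in_open[OF open_slice_s[OF assms(1), of t], of s] assms(2) by simp
  then have "eventually (\<lambda>u. F (u,t) = G (u,t)) (nhds s)"
    by eventually_elim (use assms(3) in auto)
  then show ?thesis by (simp add: dth_def deriv_cong_ev)
qed

lemma jac_theta: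
  assumes sa: "smooth2_on U a" and sk: "smooth2_on U k"
    and J: "\<And>z. z \<in> U \<Longrightarrow> dt (dt a) z + k z * a z = 0" and w: "w \<in> U"
  shows "dt (dt (dth a)) w = - (dth k w * a w + k w * dth a w)"
proof -
  have oU: "open U" using sa sm_open by blast
  obtain s t where st: "w = (s,t)" by fastforce
  have "dt (dt (dth a)) (s,t) = dt (dth (dt a)) (s,t)"
    by (rule dt_cong[OF oU]) (use st w in \<open>auto intro: clairaut[OF sa]\<close>)
  also have "\<dots> = dth (dt (dt a)) (s,t)"
    using clairaut[OF smooth_dt[OF sa]] st w by auto
  also have "\<dots> = dth (\<lambda>w. - (k w * a w)) (s,t)"
    by (rule dth_cong[OF oU]) (use st w J in \<open>auto simp: eq_neg_iff_add_eq_0\<close>)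
  also have "\<dots> = - (dth k (s,t) * a (s,t) + k (s,t) * dth a (s,t))"
  proof -
    have "((\<lambda>u. - (k (u,t) * a (u,t))) has_real_derivative - (dth k (s,t) * a (s,t) + k (s,t) * dth a (s,t))) (at s)"
      using sm_ds[OF sk, of s t "[]"] sm_ds[OF sa, of s t "[]"] st w
      by (auto intro!: derivative_eq_intros)
    then show ?thesis by (simp add: dth_def DERIV_imp_deriv)
  qed
  finally show ?thesis using st by simp
qed


lemma alg3:
  fixes a b k k1 kth p p1 A A1 A2 B B1 B2 a1 a2 b1 b2 :: real
  assumes "b2 = - k * b" "a2 = - k * a" "A2 = - (kth * a + k * A)" "B2 = - (kth * b + k * B)"
    "a * b1 - a1 * b = 1" "p1 = b1 * A + b * A1 - a1 * B - a * B1"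
  shows "(-2*(k1*p + k*p1) + 2*(b2*A1 + b1*A2 - a2*B1 - a1*B2)) + 4*k*p1 + 2*k1*p = -2*kth"
proof -
  have "(-2*(k1*p + k*p1) + 2*(b2*A1 + b1*A2 - a2*B1 - a1*B2)) + 4*k*p1 + 2*k1*p
        = -2*kth*(a * b1 - a1 * b)"
    unfolding assms(1-4,6) by algebra
  then show ?thesis using assms(5) by simp
qed

lemma wronsk:
  assumes sa: "smooth2_on U a" and sb: "smooth2_on U b"
    and U_zero: "\<And>s. (s, 0) \<in> U"
    and U_slices: "\<And>s. is_interval {t. (s, t) \<in> U}"
    and a_jacobi: "\<And>z. z \<in> U \<Longrightarrow> dt (dt a) z + k z * a z = 0"
    and b_jacobi: "\<And>z. z \<in> U \<Longrightarrow> dt (dt b) z + k z * b z = 0"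
    and a_init: "\<And>s. a (s, 0) = 1 \<and> dt a (s, 0) = 0"
    and b_init: "\<And>s. b (s, 0) = 0 \<and> dt b (s, 0) = 1"
    and st: "(s,t) \<in> U"
  shows "a (s,t) * dt b (s,t) - dt a (s,t) * b (s,t) = 1"
proof -
  define S where "S = {t. (s, t) \<in> U}"
  have cS: "convex S" using U_slices is_interval_convex_1 S_def by blast
  define W where "W = (\<lambda>u. a (s,u) * dt b (s,u) - dt a (s,u) * b (s,u))"
  have "\<exists>c. \<forall>x\<in>S. W x = c"
  proof (rule has_field_derivative_zero_constant[OF cS])
    fix x assume x: "x \<in> S"
    then have xU: "(s,x) \<in> U" by (simp add: S_def)
    have d1: "((\<lambda>u. a (s,u)) has_real_derivative dt a (s,x)) (at x)" using sm_dt[OF sa xU, of "[]"] by simp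
    have d2: "((\<lambda>u. b (s,u)) has_real_derivative dt b (s,x)) (at x)" using sm_dt[OF sb xU, of "[]"] by simp
    have d3: "((\<lambda>u. dt a (s,u)) has_real_derivative dt (dt a) (s,x)) (at x)" using sm_dt[OF sa xU, of "[False]"] by simp
    have d4: "((\<lambda>u. dt b (s,u)) has_real_derivative dt (dt b) (s,x)) (at x)" using sm_dt[OF sb xU, of "[False]"] by simp
    have "(W has_real_derivative
       (dt a (s,x) * dt b (s,x) + a (s,x) * dt (dt b) (s,x) - (dt (dt a) (s,x) * b (s,x) + dt a (s,x) * dt b (s,x)))) (at x)"
      unfolding W_def by (rule derivative_eq_intros d1 d2 d3 d4 refl | simp)+
    moreover have "dt a (s,x) * dt b (s,x) + a (s,x) * dt (dt b) (s,x) - (dt (dt a) (s,x) * b (s,x) + dt a (s,x) * dt b (s,x)) = 0"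
    proof -
      have "dt (dt b) (s,x) = - k (s,x) * b (s,x)" "dt (dt a) (s,x) = - k (s,x) * a (s,x)"
        using a_jacobi[OF xU] b_jacobi[OF xU] by linarith+
      then show ?thesis by (simp add: algebra_simps)
    qed
    ultimately show "(W has_real_derivative 0) (at x within S)"
      by (simp add: has_field_derivative_at_within)
  qed
  then obtain c where c: "\<forall>x\<in>S. W x = c" by blast
  have "0 \<in> S" "t \<in> S" using U_zero st by (simp_all add: S_def)
  then have "W t = W 0" using c by simp
  also have "W 0 = 1" using a_init b_init by (simp add: W_def)
  finally show ?thesis by (simp add: W_def)
qed


theorem lemma2p1:
  fixes U :: "(real \<times> real) set"
    and k a b :: "real \<times> real \<Rightarrow> real"
  assumes U_open: "open U"
    and U_zero: "\<And>s. (s, 0) \<in> U"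
    and U_slices: "\<And>s. is_interval {t. (s, t) \<in> U}"
    and k_smooth: "smooth2_on U k"
    and a_smooth: "smooth2_on U a"
    and b_smooth: "smooth2_on U b"
    and a_jacobi: "\<And>z. z \<in> U \<Longrightarrow> dt (dt a) z + k z * a z = 0"
    and b_jacobi: "\<And>z. z \<in> U \<Longrightarrow> dt (dt b) z + k z * b z = 0"
    and a_init: "\<And>s. a (s, 0) = 1 \<and> dt a (s, 0) = 0"
    and b_init: "\<And>s. b (s, 0) = 0 \<and> dt b (s, 0) = 1"
  defines "\<phi> \<equiv> (\<lambda>z. b z * dth a z - a z * dth b z)"
  shows "(\<forall>z\<in>U. dt (dt (dt \<phi>)) z + 4 * k z * dt \<phi> z + 2 * dt k z * \<phi> z
                  = - 2 * dth k z)
         \<and> (\<forall>s. \<phi> (s, 0) = 0 \<and> dt \<phi> (s, 0) = 0 \<and> dt (dt \<phi>) (s, 0) = 0)"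
proof -
  define P1 where "P1 = (\<lambda>w. dt b w * dth a w + b w * dt (dth a) w - dt a w * dth b w - a w * dt (dth b) w)"
  define Q2 where "Q2 = (\<lambda>w. -2 * k w * \<phi> w + 2 * (dt b w * dt (dth a) w - dt a w * dt (dth b) w))"
  have Ja: "dt (dt a) w = - k w * a w" if "w \<in> U" for w using a_jacobi[OF that] by linarith
  have Jb: "dt (dt b) w = - k w * b w" if "w \<in> U" for w using b_jacobi[OF that] by linarith
  have Ca: "dt (dt (dth a)) w = - (dth k w * a w + k w * dth a w)" if "w \<in> U" for w
    by (rule jac_theta[OF a_smooth k_smooth a_jacobi that])
  have Cb: "dt (dt (dth b)) w = - (dth k w * b w + k w * dth b w)" if "w \<in> U" for w
    by (rule jac_theta[OF b_smooth k_smooth b_jacobi that])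
  have Dphi: "((\<lambda>u. \<phi> (s,u)) has_real_derivative P1 (s,t)) (at t)" if st: "(s,t) \<in> U" for s t
  proof -
    note a0 = sm_dt[OF a_smooth st, of "[]", simplified]
    note b0 = sm_dt[OF b_smooth st, of "[]", simplified]
    note a1 = sm_dt[OF a_smooth st, of "[True]", simplified]
    note b1 = sm_dt[OF b_smooth st, of "[True]", simplified]
    show ?thesis unfolding \<phi>_def P1_def
      by (rule derivative_eq_intros a0 b0 a1 b1 refl | simp)+
  qed
  have phi1: "dt \<phi> w = P1 w" if "w \<in> U" for w
  proof -
    obtain s t where st: "w = (s,t)" by fastforce
    show ?thesis using Dphi[of s t] that st by (simp add: dt_def DERIV_imp_deriv)
  qed
  have P1Q2: "dt P1 w = Q2 w" if "w \<in> U" for w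
  proof -
    obtain s t where wst: "w = (s,t)" by fastforce
    have st: "(s,t) \<in> U" using that wst by simp
    note a0 = sm_dt[OF a_smooth st, of "[]", simplified]
    note b0 = sm_dt[OF b_smooth st, of "[]", simplified]
    note a1 = sm_dt[OF a_smooth st, of "[True]", simplified]
    note b1 = sm_dt[OF b_smooth st, of "[True]", simplified]
    note a2 = sm_dt[OF a_smooth st, of "[False]", simplified]
    note b2 = sm_dt[OF b_smooth st, of "[False]", simplified]
    note a3 = sm_dt[OF a_smooth st, of "[False,True]", simplified]
    note b3 = sm_dt[OF b_smooth st, of "[False,True]", simplified]
    have "((\<lambda>u. P1 (s,u)) has_real_derivative
       (dt (dt b) (s,t) * dth a (s,t) + dt b (s,t) * dt (dth a) (s,t)
        + (dt b (s,t) * dt (dth a) (s,t) + b (s,t) * dt (dt (dth a)) (s,t))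
        - (dt (dt a) (s,t) * dth b (s,t) + dt a (s,t) * dt (dth b) (s,t))
        - (dt a (s,t) * dt (dth b) (s,t) + a (s,t) * dt (dt (dth b)) (s,t)))) (at t)"
      unfolding P1_def
      by (rule derivative_eq_intros a0 b0 a1 b1 a2 b2 a3 b3 refl | simp)+
    then have "dt P1 (s,t) = dt (dt b) (s,t) * dth a (s,t) + dt b (s,t) * dt (dth a) (s,t)
        + (dt b (s,t) * dt (dth a) (s,t) + b (s,t) * dt (dt (dth a)) (s,t))
        - (dt (dt a) (s,t) * dth b (s,t) + dt a (s,t) * dt (dth b) (s,t))
        - (dt a (s,t) * dt (dth b) (s,t) + a (s,t) * dt (dt (dth b)) (s,t))"
      by (simp add: dt_def DERIV_imp_deriv)
    also have "\<dots> = Q2 (s,t)"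
      unfolding Q2_def \<phi>_def Ja[OF st] Jb[OF st] Ca[OF st] Cb[OF st] by algebra
    finally show ?thesis using wst by simp
  qed
  have phi2: "dt (dt \<phi>) w = Q2 w" if "w \<in> U" for w
  proof -
    obtain s t where wst: "w = (s,t)" by fastforce
    have "dt (dt \<phi>) (s,t) = dt P1 (s,t)"
      by (rule dt_cong[OF U_open]) (use that wst phi1 in auto)
    then show ?thesis using P1Q2 that wst by simp
  qed
  have main: "dt (dt (dt \<phi>)) z + 4 * k z * dt \<phi> z + 2 * dt k z * \<phi> z = - 2 * dth k z"
    if z: "z \<in> U" for z
  proof -
    obtain s t where zst: "z = (s,t)" by fastforce
    have st: "(s,t) \<in> U" using z zst by simp
    note a0 = sm_dt[OF a_smooth st, of "[]", simplified]
    note b0 = sm_dt[OF b_smooth st, of "[]", simplified]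
    note k0 = sm_dt[OF k_smooth st, of "[]", simplified]
    note a2 = sm_dt[OF a_smooth st, of "[False]", simplified]
    note b2 = sm_dt[OF b_smooth st, of "[False]", simplified]
    note a3 = sm_dt[OF a_smooth st, of "[False,True]", simplified]
    note b3 = sm_dt[OF b_smooth st, of "[False,True]", simplified]
    note p0 = Dphi[OF st]
    have e1: "dt (dt (dt \<phi>)) (s,t) = dt Q2 (s,t)"
      by (rule dt_cong[OF U_open st]) (rule phi2)
    have "((\<lambda>u. Q2 (s,u)) has_real_derivative
        (-2 * (dt k (s,t) * \<phi> (s,t) + k (s,t) * P1 (s,t))
         + 2 * (dt (dt b) (s,t) * dt (dth a) (s,t) + dt b (s,t) * dt (dt (dth a)) (s,t)
             - dt (dt a) (s,t) * dt (dth b) (s,t) - dt a (s,t) * dt (dt (dth b)) (s,t)))) (at t)"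
      unfolding Q2_def
      by (rule derivative_eq_intros a0 b0 k0 a2 b2 a3 b3 p0 refl | simp)+
    then have e2: "dt Q2 (s,t) = (-2 * (dt k (s,t) * \<phi> (s,t) + k (s,t) * P1 (s,t))
         + 2 * (dt (dt b) (s,t) * dt (dth a) (s,t) + dt b (s,t) * dt (dt (dth a)) (s,t)
             - dt (dt a) (s,t) * dt (dth b) (s,t) - dt a (s,t) * dt (dt (dth b)) (s,t)))"
      by (simp add: dt_def DERIV_imp_deriv)
    have W: "a (s,t) * dt b (s,t) - dt a (s,t) * b (s,t) = 1"
      by (rule wronsk[OF a_smooth b_smooth U_zero U_slices a_jacobi b_jacobi a_init b_init st])
    have "(-2 * (dt k (s,t) * \<phi> (s,t) + k (s,t) * P1 (s,t))
         + 2 * (dt (dt b) (s,t) * dt (dth a) (s,t) + dt b (s,t) * dt (dt (dth a)) (s,t)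
             - dt (dt a) (s,t) * dt (dth b) (s,t) - dt a (s,t) * dt (dt (dth b)) (s,t)))
         + 4 * k (s,t) * P1 (s,t) + 2 * dt k (s,t) * \<phi> (s,t) = - 2 * dth k (s,t)"
      by (rule alg3[OF Jb[OF st] Ja[OF st] Ca[OF st] Cb[OF st] W]) (simp add: P1_def)
    then show ?thesis using e1 e2 phi1[OF st] zst by simp
  qed
  have init: "\<phi> (s, 0) = 0 \<and> dt \<phi> (s, 0) = 0 \<and> dt (dt \<phi>) (s, 0) = 0" for s
  proof -
    have s0: "(s,0) \<in> U" by (rule U_zero)
    have ea: "(\<lambda>u. a (u,0)) = (\<lambda>u. 1)" using a_init by auto
    have eb: "(\<lambda>u. b (u,0)) = (\<lambda>u. 0)" using b_init by auto
    have eda: "(\<lambda>u. dt a (u,0)) = (\<lambda>u. 0)" using a_init by auto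
    have edb: "(\<lambda>u. dt b (u,0)) = (\<lambda>u. 1)" using b_init by auto
    have tha: "dth a (s,0) = 0" by (simp add: dth_def ea)
    have thb: "dth b (s,0) = 0" by (simp add: dth_def eb)
    have tda: "dt (dth a) (s,0) = 0"
      using clairaut[OF a_smooth s0] by (simp add: dth_def eda)
    have tdb: "dt (dth b) (s,0) = 0"
      using clairaut[OF b_smooth s0] by (simp add: dth_def edb)
    have "\<phi> (s,0) = 0" using a_init b_init thb by (simp add: \<phi>_def)
    moreover have "dt \<phi> (s,0) = 0" using phi1[OF s0] a_init b_init tha thb tda tdb
      by (simp add: P1_def)
    moreover have "dt (dt \<phi>) (s,0) = 0" using phi2[OF s0] a_init b_init tha thb tda tdb
      by (simp add: Q2_def \<phi>_def)
    ultimately show ?thesis by blast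
  qed
  show ?thesis using main init by blast
qed

end
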